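(* Let $n\in\mathbb{N}$ and let $\ell:[0,1]\to\mathbb{R}$ be convex and $L$-Lipschitz. There exists an online learning strategy that, when presented sequentially (possibly adversarially and adaptively) with channel test operators $E_{A,B}^{(t)}$, $t\in\{1,\dots,T\}$, and associated losses $\ell_t(\cdot)=\ell((\cdot)-b_t)$ with $b_t\in[0,1]$, outputs hypotheses $N_{A,B}^{(t)}\in\mathsf{PAULI}_n'$ such that for every $n$-qubit Pauli channel $\mathcal{P}$, \[ \sum_{t=1}^T \ell_t\big(\mathrm{Tr}[E_{A,B}^{(t)}N_{A,B}^{(t)}]\big) - \sum_{t=1}^T \ell_t\big(\mathrm{Tr}[E_{A,B}^{(t)}C_{A,B}^{\mathcal{P}}]\big) = \mathcal{O}(L\sqrt{nT}). \]
   Context: $A,B$ are $n$-qubit systems, $d=2^n$. Choi matrix: $C^{\mathcal{N}}_{A,B}=\sum_{i,j=0}^{d-1}|i\rangle\langle j|\otimes\mathcal{N}(|i\rangle\langle j|)$. A channel test operator is $E_{A,B}\geq0$ with $E_{A,B}\leq\sigma_A\otimes\mathbb{1}_B$ for some density operator $\sigma_A$. For $\vec z,\vec x\in\{0,1\}^n$ the Pauli operator is $P^{\vec z,\vec x}=\mathrm{i}^{\vec z\cdot\vec x}Z^{\vec z}X^{\vec x}$ (tensor products of single-qubit $Z^{z_i}$, $X^{x_i}$). An $n$-qubit Pauli channel is $\mathcal{P}(\rho)=\sum_{\vec z,\vec x}p_{\vec z,\vec x}P^{\vec z,\vec x}\rho P^{\vec z,\vec x\dagger}$ for a probability vector $(p_{\vec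 z,\vec x})$ on $\{0,1\}^n\times\{0,1\}^n$. $\mathsf{PAULI}_n'$ is the set of Choi matrices of $n$-qubit Pauli channels. In round $t$ the adversary presents $E^{(t)}$, the learner outputs $N^{(t)}$ (depending only on past information) and predicts $\mathrm{Tr}[E^{(t)}N^{(t)}]$, then $b_t$ is revealed. *)

theory Defs
  imports "HOL-Analysis.Convex" "Jordan_Normal_Form.Matrix"
begin

type_synonym cmat = "complex mat"

definition mtrace :: "cmat \<Rightarrow> complex" where
  "mtrace A = (\<Sum>i<dim_row A. A $$ (i, i))"

definition adj :: "cmat \<Rightarrow> cmat" where
  "adj A = mat (dim_col A) (dim_row A) (\<lambda>(i, j). cnj (A $$ (j, i)))"

definition psd :: "nat \<Rightarrow> cmat \<Rightarrow> bool" where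
  "psd k A \<longleftrightarrow> A \<in> carrier_mat k k \<and>
     (\<forall>v \<in> carrier_vec k. (\<Sum>i<k. cnj (v $ i) * (A *\<^sub>v v) $ i) \<in> \<real> \<and>
                           0 \<le> Re (\<Sum>i<k. cnj (v $ i) * (A *\<^sub>v v) $ i))"

definition density :: "nat \<Rightarrow> cmat \<Rightarrow> bool" where
  "density k \<sigma> \<longleftrightarrow> psd k \<sigma> \<and> mtrace \<sigma> = 1"

definition kron :: "cmat \<Rightarrow> cmat \<Rightarrow> cmat" where
  "kron A B = mat (dim_row A * dim_row B) (dim_col A * dim_col B)
     (\<lambda>(i, j). A $$ (i div dim_row B, j div dim_col B) * B $$ (i mod dim_row B, j mod dim_col B))"

definition msum :: "nat \<Rightarrow> nat \<Rightarrow> ('i \<Rightarrow> cmat) \<Rightarrow> 'i set \<Rightarrow> cmat" where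
  "msum k l f S = mat k l (\<lambda>ij. \<Sum>s\<in>S. f s $$ ij)"

abbreviation qdim :: "nat \<Rightarrow> nat" where "qdim n \<equiv> 2 ^ n"

definition ketbra :: "nat \<Rightarrow> nat \<Rightarrow> nat \<Rightarrow> cmat" where
  "ketbra d i j = mat d d (\<lambda>(r, c). if r = i \<and> c = j then 1 else 0)"

definition choi :: "nat \<Rightarrow> (cmat \<Rightarrow> cmat) \<Rightarrow> cmat" where
  "choi d N = msum (d * d) (d * d) (\<lambda>(i, j). kron (ketbra d i j) (N (ketbra d i j))) ({..<d} \<times> {..<d})"

definition channel_test :: "nat \<Rightarrow> cmat \<Rightarrow> bool" where
  "channel_test n E \<longleftrightarrow> psd (qdim n * qdim n) E \<and>
     (\<exists>\<sigma>. density (qdim n) \<sigma> \<and> psd (qdim n * qdim n) (kron \<sigma> (1\<^sub>m (qdim n)) - E))"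

definition pauliX :: cmat where
  "pauliX = mat 2 2 (\<lambda>(r, c). if r \<noteq> c then 1 else 0)"

definition pauliZ :: cmat where
  "pauliZ = mat 2 2 (\<lambda>(r, c). if r = c then (if r = 0 then 1 else -1) else 0)"

fun kron_list :: "cmat list \<Rightarrow> cmat" where
  "kron_list [] = 1\<^sub>m 1"
| "kron_list (A # As) = kron A (kron_list As)"

definition Zpow :: "bool list \<Rightarrow> cmat" where
  "Zpow zs = kron_list (map (\<lambda>z. if z then pauliZ else 1\<^sub>m 2) zs)"

definition Xpow :: "bool list \<Rightarrow> cmat" where
  "Xpow xs = kron_list (map (\<lambda>x. if x then pauliX else 1\<^sub>m 2) xs)"

definition bdot :: "bool list \<Rightarrow> bool list \<Rightarrow> nat" where
  "bdot zs xs = length (filter (\<lambda>(z, x). z \<and> x) (zip zs xs))"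

definition pauli :: "bool list \<Rightarrow> bool list \<Rightarrow> cmat" where
  "pauli zs xs = (\<i> ^ bdot zs xs) \<cdot>\<^sub>m (Zpow zs * Xpow xs)"

definition pauli_idx :: "nat \<Rightarrow> (bool list \<times> bool list) set" where
  "pauli_idx n = {(zs, xs). length zs = n \<and> length xs = n}"

definition prob_vec :: "nat \<Rightarrow> (bool list \<times> bool list \<Rightarrow> real) \<Rightarrow> bool" where
  "prob_vec n p \<longleftrightarrow> (\<forall>k \<in> pauli_idx n. 0 \<le> p k) \<and> (\<Sum>k \<in> pauli_idx n. p k) = 1"

definition pauli_channel :: "nat \<Rightarrow> (bool list \<times> bool list \<Rightarrow> real) \<Rightarrow> cmat \<Rightarrow> cmat" where
  "pauli_channel n p \<rho> =
     msum (qdim n) (qdim n)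
       (\<lambda>(zs, xs). complex_of_real (p (zs, xs)) \<cdot>\<^sub>m (pauli zs xs * \<rho> * adj (pauli zs xs)))
       (pauli_idx n)"

definition PAULI' :: "nat \<Rightarrow> cmat set" where
  "PAULI' n = {choi (qdim n) (pauli_channel n p) | p. prob_vec n p}"

definition pred :: "cmat \<Rightarrow> cmat \<Rightarrow> real" where
  "pred E N = Re (mtrace (E * N))"

end

theory Submission
  imports Defs
begin


lemma exp_le_quad:
  fixes y :: real assumes "y \<le> 0" shows "exp y \<le> 1 + y + y\<^sup>2"
proof -
  have h1: "1 - y \<le> exp (-y)" using exp_ge_add_one_self[of "-y"] by simp
  have pos: "0 < 1 - y" using assms by simp
  have "exp y = 1 / exp (-y)" by (simp add: exp_minus field_simps)
  also have "\<dots> \<le> 1 / (1 - y)" using h1 pos by (intro divide_left_mono) auto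
  also have "\<dots> \<le> 1 + y + y\<^sup>2"
  proof -
    have e: "(1 + y + y\<^sup>2) * (1 - y) = 1 - y * y\<^sup>2"
      by (simp add: algebra_simps power2_eq_square)
    have "y * y\<^sup>2 \<le> 0" using assms by (simp add: mult_nonpos_nonneg)
    then have "1 \<le> (1 + y + y\<^sup>2) * (1 - y)" using e by linarith
    then show ?thesis using pos by (simp add: divide_le_eq)
  qed
  finally show ?thesis .
qed

lemma subgrad:
  fixes f :: "real \<Rightarrow> real"
  assumes cvx: "convex_on {-1..1} f"
    and lip: "\<forall>x\<in>{-1..1}. \<forall>y\<in>{-1..1}. \<bar>f x - f y\<bar> \<le> L * \<bar>x - y\<bar>"
    and x: "x \<in> {-1..1}"
  shows "\<exists>s. \<bar>s\<bar> \<le> L \<and> (\<forall>y\<in>{-1..1}. f x + s * (y - x) \<le> f y)"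
proof -
  have L0: "0 \<le> L" using lip[rule_format, of 1 "-1"] by auto
  show ?thesis
  proof (cases "x = -1")
    case True
    show ?thesis
    proof (intro exI[of _ "-L"] conjI ballI)
      show "\<bar>-L\<bar> \<le> L" using L0 by simp
      fix y :: real assume y: "y \<in> {-1..1}"
      have "\<bar>f x - f y\<bar> \<le> L * \<bar>x - y\<bar>" using lip x y by blast
      then show "f x + - L * (y - x) \<le> f y" using True y by (auto simp: abs_if split: if_splits)
    qed
  next
    case False
    then have xg: "-1 < x" using x by auto
    define S where "S = (\<lambda>y. (f x - f y) / (x - y)) ` {-1..<x}"
    have ne: "S \<noteq> {}" using xg by (auto simp: S_def)
    have Sle: "\<And>z. z \<in> S \<Longrightarrow> z \<le> L"
    proof -
      fix z assume "z \<in> S"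
      then obtain y where y: "y \<in> {-1..<x}" and z: "z = (f x - f y) / (x - y)" by (auto simp: S_def)
      have yI: "y \<in> {-1..1}" using y x by auto
      have "\<bar>f x - f y\<bar> \<le> L * \<bar>x - y\<bar>" using lip x yI by blast
      then have "f x - f y \<le> L * (x - y)" using y by auto
      then show "z \<le> L" using y z by (simp add: divide_le_eq)
    qed
    have bdd: "bdd_above S" using Sle by (auto simp: bdd_above_def)
    define s where "s = Sup S"
    have sL: "s \<le> L" unfolding s_def using ne Sle by (intro cSup_least) auto
    have m1: "(f x - f (-1)) / (x - (-1)) \<in> S" using xg unfolding S_def by (intro image_eqI[where x="-1"]) auto
    have "(f x - f (-1)) / (x - (-1)) \<ge> -L"
    proof -
      have "\<bar>f x - f (-1)\<bar> \<le> L * \<bar>x - (-1)\<bar>" using lip[rule_format, OF x, of "-1"] by simp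
      then have "-L * (x + 1) \<le> f x - f (-1)" using xg by auto
      then show ?thesis using xg by (simp add: le_divide_eq)
    qed
    then have sL2: "-L \<le> s" unfolding s_def using cSup_upper[OF m1 bdd] by linarith
    show ?thesis
    proof (intro exI[of _ s] conjI ballI)
      show "\<bar>s\<bar> \<le> L" using sL sL2 by auto
      fix y :: real assume y: "y \<in> {-1..1}"
      consider "y < x" | "y = x" | "x < y" by linarith
      then show "f x + s * (y - x) \<le> f y"
      proof cases
        case 1
        then have "(f x - f y) / (x - y) \<in> S" using y by (auto simp: S_def)
        then have "(f x - f y) / (x - y) \<le> s" unfolding s_def using bdd by (rule cSup_upper)
        then have "f x - f y \<le> s * (x - y)" using 1 by (simp add: divide_le_eq)
        then show ?thesis by (simp add: algebra_simps)
      next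
        case 2 then show ?thesis by simp
      next
        case 3
        have "s \<le> (f x - f y) / (x - y)" unfolding s_def
        proof (rule cSup_least[OF ne])
          fix z assume "z \<in> S"
          then obtain w where w: "w \<in> {-1..<x}" and z: "z = (f x - f w) / (x - w)" by (auto simp: S_def)
          have wI: "w \<in> {-1..1}" using w x by auto
          have a: "(f w - f x) / (w - x) \<le> (f w - f y) / (w - y)"
            using convex_on_slope_le(1)[OF cvx wI y, of x] w 3 by auto
          have b: "(f w - f y) / (w - y) \<le> (f x - f y) / (x - y)"
            using convex_on_slope_le(2)[OF cvx wI y, of x] w 3 by auto
          have "(f x - f w) / (x - w) = (f w - f x) / (w - x)" by (metis minus_diff_eq minus_divide_divide)
          then have "z = (f w - f x) / (w - x)" using z by simp
          then show "z \<le> (f x - f y) / (x - y)" using a b by linarith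
        qed
        moreover have "(f x - f y) / (x - y) = (f y - f x) / (y - x)" by (metis minus_diff_eq minus_divide_divide)
        ultimately have "s \<le> (f y - f x) / (y - x)" by simp
        then have "s * (y - x) \<le> f y - f x" using 3 by (simp add: le_divide_eq)
        then show ?thesis by simp
      qed
    qed
  qed
qed

definition hw :: "'k set \<Rightarrow> real \<Rightarrow> ('k \<Rightarrow> real) \<Rightarrow> 'k \<Rightarrow> real" where
  "hw K \<eta> c k = exp (- \<eta> * c k) / (\<Sum>j\<in>K. exp (- \<eta> * c j))"

lemma hw_nonneg: "0 \<le> hw K \<eta> c k"
  unfolding hw_def by (intro divide_nonneg_nonneg sum_nonneg) auto

lemma hw_sum: assumes "finite K" "K \<noteq> {}" shows "(\<Sum>k\<in>K. hw K \<eta> c k) = 1"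
proof -
  have "(\<Sum>j\<in>K. exp (- \<eta> * c j)) > 0" using assms by (intro sum_pos) auto
  then show ?thesis unfolding hw_def by (simp add: sum_divide_distrib[symmetric])
qed

lemma hedge:
  fixes l :: "nat \<Rightarrow> 'k \<Rightarrow> real"
  assumes K: "finite K" "k0 \<in> K" and eta: "\<eta> > 0"
    and l: "\<And>t k. t < T \<Longrightarrow> k \<in> K \<Longrightarrow> 0 \<le> l t k \<and> l t k \<le> 1"
  shows "(\<Sum>t<T. \<Sum>k\<in>K. hw K \<eta> (\<lambda>k. \<Sum>s<t. l s k) k * l t k) - (\<Sum>t<T. l t k0)
           \<le> ln (real (card K)) / \<eta> + \<eta> * T"
proof -
  define c where "c t k = (\<Sum>s<t. l s k)" for t k
  define W where "W t = (\<Sum>k\<in>K. exp (- \<eta> * c t k))" for t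
  define p where "p t k = hw K \<eta> (c t) k" for t k
  have Kne: "K \<noteq> {}" using K by auto
  have Wpos: "W t > 0" for t unfolding W_def using K by (intro sum_pos) auto
  have psum: "(\<Sum>k\<in>K. p t k) = 1" for t unfolding p_def using hw_sum[OF K(1) Kne] .
  have pnn: "p t k \<ge> 0" for t k unfolding p_def by (rule hw_nonneg)
  have step: "ln (W (Suc t)) \<le> ln (W t) - \<eta> * (\<Sum>k\<in>K. p t k * l t k) + \<eta>\<^sup>2" if tT: "t < T" for t
  proof -
    define X where "X = (\<Sum>k\<in>K. p t k * exp (- \<eta> * l t k))"
    have cS: "c (Suc t) k = c t k + l t k" for k by (simp add: c_def)
    have "X = (\<Sum>k\<in>K. exp (- \<eta> * c t k) * exp (- \<eta> * l t k)) / W t"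
      unfolding X_def p_def hw_def W_def by (simp add: sum_divide_distrib)
    also have "(\<Sum>k\<in>K. exp (- \<eta> * c t k) * exp (- \<eta> * l t k)) = W (Suc t)"
      unfolding W_def cS by (simp add: exp_add[symmetric] algebra_simps)
    finally have XW: "X = W (Suc t) / W t" .
    have Xpos: "X > 0" using XW Wpos by simp
    have "X \<le> (\<Sum>k\<in>K. p t k * (1 + (- \<eta> * l t k) + (- \<eta> * l t k)\<^sup>2))"
      unfolding X_def
    proof (intro sum_mono mult_left_mono pnn)
      fix k assume "k \<in> K"
      then have "- \<eta> * l t k \<le> 0" using l[OF tT] eta by auto
      then show "exp (- \<eta> * l t k) \<le> 1 + - \<eta> * l t k + (- \<eta> * l t k)\<^sup>2" by (rule exp_le_quad)
    qed
    also have "\<dots> \<le> (\<Sum>k\<in>K. p t k * (1 - \<eta> * l t k + \<eta>\<^sup>2))"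
    proof (intro sum_mono mult_left_mono pnn)
      fix k assume "k \<in> K"
      then have a: "0 \<le> l t k" "l t k \<le> 1" using l[OF tT] by auto
      have "(l t k)\<^sup>2 \<le> 1" using a by (simp add: power_le_one)
      then have "\<eta>\<^sup>2 * (l t k)\<^sup>2 \<le> \<eta>\<^sup>2 * 1" by (intro mult_left_mono) auto
      then show "1 + - \<eta> * l t k + (- \<eta> * l t k)\<^sup>2 \<le> 1 - \<eta> * l t k + \<eta>\<^sup>2"
        by (simp add: power_mult_distrib)
    qed
    also have "\<dots> = (\<Sum>k\<in>K. p t k) * (1 + \<eta>\<^sup>2) - \<eta> * (\<Sum>k\<in>K. p t k * l t k)"
      by (simp add: algebra_simps sum.distrib sum_distrib_left sum_distrib_right sum_subtractf)
    also have "\<dots> = 1 + \<eta>\<^sup>2 - \<eta> * (\<Sum>k\<in>K. p t k * l t k)" using psum by simp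
    finally have Xle: "X \<le> 1 + \<eta>\<^sup>2 - \<eta> * (\<Sum>k\<in>K. p t k * l t k)" .
    have "W t \<noteq> 0" using Wpos[of t] by simp
    then have "W (Suc t) = W t * X" using XW by simp
    then have "ln (W (Suc t)) = ln (W t) + ln X" using Wpos[of t] Xpos by (simp add: ln_mult)
    moreover have "ln X \<le> X - 1" using Xpos by (rule ln_le_minus_one)
    ultimately show ?thesis using Xle by linarith
  qed
  have tel: "m \<le> T \<Longrightarrow> ln (W m) \<le> ln (W 0) - \<eta> * (\<Sum>t<m. \<Sum>k\<in>K. p t k * l t k) + \<eta>\<^sup>2 * m" for m
  proof (induction m)
    case 0 then show ?case by simp
  next
    case (Suc m)
    then have "ln (W m) \<le> ln (W 0) - \<eta> * (\<Sum>t<m. \<Sum>k\<in>K. p t k * l t k) + \<eta>\<^sup>2 * m" by simp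
    moreover have "ln (W (Suc m)) \<le> ln (W m) - \<eta> * (\<Sum>k\<in>K. p m k * l m k) + \<eta>\<^sup>2"
      using Suc.prems by (intro step) simp
    ultimately show ?case by (simp add: algebra_simps)
  qed
  have W0: "W 0 = real (card K)" by (simp add: W_def c_def)
  have "exp (- \<eta> * c T k0) \<le> W T" unfolding W_def
    using K by (intro member_le_sum) auto
  then have "- \<eta> * c T k0 \<le> ln (W T)" using Wpos
    by (metis exp_le_cancel_iff exp_ln)
  with tel[OF order.refl] W0 have
    "\<eta> * ((\<Sum>t<T. \<Sum>k\<in>K. p t k * l t k) - c T k0) \<le> ln (real (card K)) + \<eta>\<^sup>2 * T"
    by (simp add: algebra_simps)
  then have "(\<Sum>t<T. \<Sum>k\<in>K. p t k * l t k) - c T k0 \<le> (ln (real (card K)) + \<eta>\<^sup>2 * T) / \<eta>"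
    using eta by (simp add: le_divide_eq mult.commute)
  also have "\<dots> = ln (real (card K)) / \<eta> + \<eta> * T" using eta
    by (simp add: field_simps power2_eq_square)
  moreover have ceq: "c t = (\<lambda>k. \<Sum>s<t. l s k)" for t by (simp add: c_def fun_eq_iff)
  ultimately show ?thesis unfolding p_def ceq by simp
qed



lemma mult_entry:
  fixes A B :: cmat
  assumes "dim_col A = dim_row B" "i < dim_row A" "j < dim_col B"
  shows "(A * B) $$ (i,j) = (\<Sum>m<dim_row B. A $$ (i,m) * B $$ (m,j))"
  using assms by (simp add: scalar_prod_def atLeast0LessThan)

lemma sum_split:
  fixes a b :: nat and f :: "nat \<Rightarrow> 'a::comm_monoid_add"
  shows "(\<Sum>m<a*b. f m) = (\<Sum>i<a. \<Sum>j<b. f (i*b + j))"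
proof -
  have "(\<Sum>m<a*b. f m) = (\<Sum>i<a. sum f {i*b..<i*b+b})" using sum.nat_group[of f b a] by simp
  also have "\<dots> = (\<Sum>i<a. \<Sum>j<b. f (i*b+j))"
  proof (rule sum.cong[OF refl])
    fix i
    have "sum f {0 + i*b..<b + i*b} = (\<Sum>j\<in>{0..<b}. f (j + i*b))" by (rule sum.shift_bounds_nat_ivl)
    then show "sum f {i*b..<i*b+b} = (\<Sum>j<b. f (i*b+j))" by (simp add: atLeast0LessThan add.commute)
  qed
  finally show ?thesis .
qed

lemma dim_kron[simp]: "dim_row (kron A B) = dim_row A * dim_row B" "dim_col (kron A B) = dim_col A * dim_col B"
  by (simp_all add: kron_def)

lemma index_kron:
  "i < dim_row A * dim_row B \<Longrightarrow> j < dim_col A * dim_col B \<Longrightarrow>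
   kron A B $$ (i,j) = A $$ (i div dim_row B, j div dim_col B) * B $$ (i mod dim_row B, j mod dim_col B)"
  by (simp add: kron_def)

lemma dim_adj[simp]: "dim_row (adj A) = dim_col A" "dim_col (adj A) = dim_row A"
  by (simp_all add: adj_def)

lemma index_adj: "i < dim_col A \<Longrightarrow> j < dim_row A \<Longrightarrow> adj A $$ (i,j) = cnj (A $$ (j,i))"
  by (simp add: adj_def)

lemma divmod_simps:
  fixes u v k :: nat assumes "v < k"
  shows "(u*k+v) div k = u" "(u*k+v) mod k = v"
  using assms by simp_all

definition unitary :: "cmat \<Rightarrow> nat \<Rightarrow> bool" where
  "unitary U m \<longleftrightarrow> U \<in> carrier_mat m m \<and> adj U * U = 1\<^sub>m m"

lemma unitary_iff:
  assumes "U \<in> carrier_mat m m"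
  shows "unitary U m \<longleftrightarrow> (\<forall>i<m. \<forall>j<m. (\<Sum>a<m. cnj (U$$(a,i)) * U$$(a,j)) = (if i = j then 1 else 0))"
proof -
  have e: "(adj U * U) $$ (i,j) = (\<Sum>a<m. cnj (U$$(a,i)) * U$$(a,j))" if "i < m" "j < m" for i j
  proof -
    have "(adj U * U) $$ (i,j) = (\<Sum>a<dim_row U. adj U $$ (i,a) * U $$ (a,j))"
      using assms that by (intro mult_entry) auto
    then show ?thesis using assms that by (simp add: index_adj)
  qed
  show ?thesis
  proof
    assume "unitary U m"
    then have "adj U * U = 1\<^sub>m m" by (simp add: unitary_def)
    then show "\<forall>i<m. \<forall>j<m. (\<Sum>a<m. cnj (U$$(a,i)) * U$$(a,j)) = (if i = j then 1 else 0)"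
      using e by (metis index_one_mat(1))
  next
    assume h: "\<forall>i<m. \<forall>j<m. (\<Sum>a<m. cnj (U$$(a,i)) * U$$(a,j)) = (if i = j then 1 else 0)"
    have "adj U * U = 1\<^sub>m m"
      by (rule eq_matI) (use assms e h in auto)
    then show "unitary U m" using assms by (simp add: unitary_def)
  qed
qed

lemma unitary_kron:
  assumes A: "unitary A m" and B: "unitary B k"
  shows "unitary (kron A B) (m*k)"
proof -
  have Ac: "A \<in> carrier_mat m m" and Bc: "B \<in> carrier_mat k k" using A B by (auto simp: unitary_def)
  have Ao: "\<And>i j. i<m \<Longrightarrow> j<m \<Longrightarrow> (\<Sum>a<m. cnj (A$$(a,i)) * A$$(a,j)) = (if i = j then 1 else 0)"
    using A Ac unitary_iff by blast
  have Bo: "\<And>i j. i<k \<Longrightarrow> j<k \<Longrightarrow> (\<Sum>a<k. cnj (B$$(a,i)) * B$$(a,j)) = (if i = j then 1 else 0)"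
    using B Bc unitary_iff by blast
  have Kc: "kron A B \<in> carrier_mat (m*k) (m*k)" using Ac Bc by auto
  show ?thesis unfolding unitary_iff[OF Kc]
  proof (intro allI impI)
    fix i j assume i: "i < m*k" and j: "j < m*k"
    have k0: "0 < k" using i by (cases k) auto
    have i1: "i div k < m" "i mod k < k" using i k0 by (auto simp: less_mult_imp_div_less)
    have j1: "j div k < m" "j mod k < k" using j k0 by (auto simp: less_mult_imp_div_less)
    have "(\<Sum>a<m*k. cnj (kron A B $$ (a,i)) * kron A B $$ (a,j))
        = (\<Sum>u<m. \<Sum>v<k. cnj (kron A B $$ (u*k+v,i)) * kron A B $$ (u*k+v,j))"
      by (rule sum_split)
    also have "\<dots> = (\<Sum>u<m. \<Sum>v<k. (cnj (A$$(u, i div k)) * A$$(u, j div k)) * (cnj (B$$(v, i mod k)) * B$$(v, j mod k)))"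
    proof (intro sum.cong refl)
      fix u v assume u: "u \<in> {..<m}" and v: "v \<in> {..<k}"
      have uv: "u*k+v < m*k"
      proof -
        have "u*k+v < u*k + k" using v by simp
        also have "\<dots> = (Suc u)*k" by simp
        also have "\<dots> \<le> m*k" using u by (intro mult_right_mono) auto
        finally show ?thesis .
      qed
      show "cnj (kron A B $$ (u*k+v,i)) * kron A B $$ (u*k+v,j)
          = (cnj (A$$(u, i div k)) * A$$(u, j div k)) * (cnj (B$$(v, i mod k)) * B$$(v, j mod k))"
        using Ac Bc uv i j v by (simp add: index_kron divmod_simps)
    qed
    also have "\<dots> = (\<Sum>u<m. cnj (A$$(u, i div k)) * A$$(u, j div k)) * (\<Sum>v<k. cnj (B$$(v, i mod k)) * B$$(v, j mod k))"
      by (simp add: sum_product)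
    also have "\<dots> = (if i div k = j div k then 1 else 0) * (if i mod k = j mod k then 1 else 0)"
      using Ao[OF i1(1) j1(1)] Bo[OF i1(2) j1(2)] by simp
    also have "\<dots> = (if i = j then 1 else 0)"
    proof -
      have "i = j \<longleftrightarrow> i div k = j div k \<and> i mod k = j mod k" by (metis div_mult_mod_eq)
      then show ?thesis by auto
    qed
    finally show "(\<Sum>a<m*k. cnj (kron A B $$ (a,i)) * kron A B $$ (a,j)) = (if i = j then 1 else 0)" .
  qed
qed

lemma adj_one: "adj (1\<^sub>m m) = 1\<^sub>m m"
  by (rule eq_matI) (auto simp: index_adj)

lemma unitary_one: "unitary (1\<^sub>m m) m"
  by (simp add: unitary_def adj_one)

lemma adj_mult:
  assumes "A \<in> carrier_mat r c" "B \<in> carrier_mat c k"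
  shows "adj (A * B) = adj B * adj A"
proof (rule eq_matI)
  fix i j assume "i < dim_row (adj B * adj A)" "j < dim_col (adj B * adj A)"
  then have ij: "i < k" "j < r" using assms by auto
  have "adj (A * B) $$ (i,j) = cnj ((A * B) $$ (j,i))" using assms ij by (simp add: index_adj)
  also have "\<dots> = cnj (\<Sum>m<c. A $$ (j,m) * B $$ (m,i))" using assms ij by (subst mult_entry) auto
  also have "\<dots> = (\<Sum>m<c. cnj (B $$ (m,i)) * cnj (A $$ (j,m)))"
    by (simp only: cnj_sum complex_cnj_mult mult.commute)
  also have "\<dots> = (\<Sum>m<c. adj B $$ (i,m) * adj A $$ (m,j))"
    using assms ij by (intro sum.cong refl) (auto simp: index_adj)
  also have "\<dots> = (adj B * adj A) $$ (i,j)" using assms ij by (subst mult_entry) auto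
  finally show "adj (A * B) $$ (i,j) = (adj B * adj A) $$ (i,j)" .
qed (use assms in auto)

lemma unitary_mult:
  assumes A: "unitary A m" and B: "unitary B m"
  shows "unitary (A * B) m"
proof -
  have Ac: "A \<in> carrier_mat m m" and Bc: "B \<in> carrier_mat m m"
    and Au: "adj A * A = 1\<^sub>m m" and Bu: "adj B * B = 1\<^sub>m m" using A B by (auto simp: unitary_def)
  have aAc: "adj A \<in> carrier_mat m m" and aBc: "adj B \<in> carrier_mat m m" using Ac Bc by auto
  have ABc: "A * B \<in> carrier_mat m m" using Ac Bc by simp
  have e1: "adj (A * B) * (A * B) = adj B * adj A * (A * B)" using adj_mult[OF Ac Bc] by simp
  have e2: "adj B * adj A * (A * B) = adj B * (adj A * (A * B))" by (rule assoc_mult_mat[OF aBc aAc ABc])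
  have e3: "adj A * (A * B) = adj A * A * B" by (rule assoc_mult_mat[OF aAc Ac Bc, symmetric])
  have e4: "adj A * A * B = B" using Au Bc by simp
  have "adj (A * B) * (A * B) = 1\<^sub>m m" unfolding e1 e2 e3 e4 by (rule Bu)
  then show ?thesis using Ac Bc by (simp add: unitary_def)
qed

lemma unitary_smult:
  assumes A: "unitary A m" and c: "cnj c * c = 1"
  shows "unitary (c \<cdot>\<^sub>m A) m"
proof -
  have Ac: "A \<in> carrier_mat m m" using A by (auto simp: unitary_def)
  have Ao: "\<And>i j. i<m \<Longrightarrow> j<m \<Longrightarrow> (\<Sum>a<m. cnj (A$$(a,i)) * A$$(a,j)) = (if i = j then 1 else 0)"
    using A Ac unitary_iff by blast
  have Cc: "c \<cdot>\<^sub>m A \<in> carrier_mat m m" using Ac by simp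
  show ?thesis unfolding unitary_iff[OF Cc]
  proof (intro allI impI)
    fix i j assume i: "i < m" and j: "j < m"
    have "(\<Sum>a<m. cnj ((c \<cdot>\<^sub>m A)$$(a,i)) * (c \<cdot>\<^sub>m A)$$(a,j)) = (\<Sum>a<m. (cnj c * c) * (cnj (A$$(a,i)) * A$$(a,j)))"
    proof (intro sum.cong refl)
      fix a assume "a \<in> {..<m}"
      then have a: "a < m" by simp
      have "(c \<cdot>\<^sub>m A)$$(a,i) = c * A$$(a,i)" "(c \<cdot>\<^sub>m A)$$(a,j) = c * A$$(a,j)"
        using Ac a i j by auto
      then show "cnj ((c \<cdot>\<^sub>m A)$$(a,i)) * (c \<cdot>\<^sub>m A)$$(a,j) = (cnj c * c) * (cnj (A$$(a,i)) * A$$(a,j))"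
        by (simp only: complex_cnj_mult mult_ac)
    qed
    also have "\<dots> = (cnj c * c) * (\<Sum>a<m. cnj (A$$(a,i)) * A$$(a,j))" by (simp add: sum_distrib_left)
    finally show "(\<Sum>a<m. cnj ((c \<cdot>\<^sub>m A)$$(a,i)) * (c \<cdot>\<^sub>m A)$$(a,j)) = (if i = j then 1 else 0)"
      using Ao[OF i j] c by simp
  qed
qed


lemma unitary_kron_list: "(\<forall>A\<in>set As. unitary A 2) \<Longrightarrow> unitary (kron_list As) (2 ^ length As)"
proof (induction As)
  case Nil then show ?case by (simp add: unitary_one)
next
  case (Cons A As)
  then have "unitary (kron A (kron_list As)) (2 * 2 ^ length As)" by (intro unitary_kron) auto
  then show ?case by simp
qed

lemma two_cases: "(\<forall>i<(2::nat). P i) \<longleftrightarrow> P 0 \<and> P 1"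
  by (auto simp: numeral_2_eq_2 less_Suc_eq)

lemma sum_two: "(\<Sum>i<(2::nat). f i) = f 0 + f 1"
  by (simp add: numeral_2_eq_2)

lemma unitary_pauliZ: "unitary pauliZ 2"
proof -
  have c: "pauliZ \<in> carrier_mat 2 2" by (simp add: pauliZ_def)
  show ?thesis unfolding unitary_iff[OF c] two_cases sum_two by (simp add: pauliZ_def)
qed

lemma unitary_pauliX: "unitary pauliX 2"
proof -
  have c: "pauliX \<in> carrier_mat 2 2" by (simp add: pauliX_def)
  show ?thesis unfolding unitary_iff[OF c] two_cases sum_two by (simp add: pauliX_def)
qed

lemma unitary_Zpow: "unitary (Zpow zs) (2 ^ length zs)"
proof -
  have "unitary (kron_list (map (\<lambda>z. if z then pauliZ else 1\<^sub>m 2) zs)) (2 ^ length (map (\<lambda>z. if z then pauliZ else 1\<^sub>m 2) zs))"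
    by (rule unitary_kron_list) (auto simp: unitary_pauliZ unitary_one)
  then show ?thesis by (simp add: Zpow_def)
qed

lemma unitary_Xpow: "unitary (Xpow xs) (2 ^ length xs)"
proof -
  have "unitary (kron_list (map (\<lambda>z. if z then pauliX else 1\<^sub>m 2) xs)) (2 ^ length (map (\<lambda>z. if z then pauliX else 1\<^sub>m 2) xs))"
    by (rule unitary_kron_list) (auto simp: unitary_pauliX unitary_one)
  then show ?thesis by (simp add: Xpow_def)
qed

lemma unitary_pauli:
  assumes "length zs = n" "length xs = n"
  shows "unitary (pauli zs xs) (2 ^ n)"
proof -
  have "unitary (Zpow zs * Xpow xs) (2 ^ n)" using unitary_Zpow[of zs] unitary_Xpow[of xs] assms
    by (intro unitary_mult) auto
  moreover have "cnj (\<i> ^ bdot zs xs) * \<i> ^ bdot zs xs = 1"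
    by (simp add: power_mult_distrib[symmetric])
  ultimately show ?thesis unfolding pauli_def by (rule unitary_smult)
qed

lemma ketbra_carrier: "ketbra d i j \<in> carrier_mat d d" by (simp add: ketbra_def)

lemma ketbra_dims[simp]: "dim_row (ketbra d i j) = d" "dim_col (ketbra d i j) = d" by (simp_all add: ketbra_def)

lemma ketbra_entry: "r < d \<Longrightarrow> c < d \<Longrightarrow> ketbra d i j $$ (r,c) = (if r = i \<and> c = j then 1 else 0)"
  by (simp add: ketbra_def)

lemma conj_entry:
  assumes P: "P \<in> carrier_mat d d" and i: "i < d" and j: "j < d" and r: "r < d" and c: "c < d"
  shows "(P * ketbra d i j * adj P) $$ (r,c) = P$$(r,i) * cnj (P$$(c,j))"
proof -
  have PK: "(P * ketbra d i j) $$ (r,m) = (if m = j then P$$(r,i) else 0)" if m: "m < d" for m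
  proof -
    have "(P * ketbra d i j) $$ (r,m) = (\<Sum>l<d. P$$(r,l) * ketbra d i j $$ (l,m))"
      using P r m by (subst mult_entry) (auto simp: ketbra_carrier)
    also have "\<dots> = (\<Sum>l<d. if l = i then (if m = j then P$$(r,i) else 0) else 0)"
      using m by (intro sum.cong refl) (auto simp: ketbra_entry)
    also have "\<dots> = (if m = j then P$$(r,i) else 0)" using i by simp
    finally show ?thesis .
  qed
  have "(P * ketbra d i j * adj P) $$ (r,c) = (\<Sum>m<d. (P * ketbra d i j)$$(r,m) * adj P $$ (m,c))"
    using P r c by (subst mult_entry) (auto simp: ketbra_carrier)
  also have "\<dots> = (\<Sum>m<d. if m = j then P$$(r,i) * cnj (P$$(c,j)) else 0)"
    using P c by (intro sum.cong refl) (auto simp: PK index_adj)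
  also have "\<dots> = P$$(r,i) * cnj (P$$(c,j))" using j by simp
  finally show ?thesis .
qed

lemma choi_entry:
  assumes dims: "\<And>i j. dim_row (\<Phi> (ketbra d i j)) = d \<and> dim_col (\<Phi> (ketbra d i j)) = d"
    and x: "x < d * d" and y: "y < d * d"
  shows "choi d \<Phi> $$ (x,y) = \<Phi> (ketbra d (x div d) (y div d)) $$ (x mod d, y mod d)"
proof -
  have d0: "0 < d" using x by (cases d) auto
  have xd: "x div d < d" "x mod d < d" using x d0 by (auto simp: less_mult_imp_div_less)
  have yd: "y div d < d" "y mod d < d" using y d0 by (auto simp: less_mult_imp_div_less)
  have "choi d \<Phi> $$ (x,y) = (\<Sum>p\<in>{..<d} \<times> {..<d}. (case p of (i, j) \<Rightarrow> kron (ketbra d i j) (\<Phi> (ketbra d i j))) $$ (x,y))"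
    using x y by (simp add: choi_def msum_def)
  also have "\<dots> = (\<Sum>p\<in>{..<d} \<times> {..<d}. if p = (x div d, y div d) then \<Phi> (ketbra d (fst p) (snd p)) $$ (x mod d, y mod d) else 0)"
  proof (intro sum.cong refl)
    fix p assume "p \<in> {..<d} \<times> {..<d}"
    obtain i j where p: "p = (i,j)" by (cases p)
    have "kron (ketbra d i j) (\<Phi> (ketbra d i j)) $$ (x,y)
        = ketbra d i j $$ (x div d, y div d) * \<Phi> (ketbra d i j) $$ (x mod d, y mod d)"
      using x y dims[of i j] by (subst index_kron) (auto simp: ketbra_def)
    also have "\<dots> = (if p = (x div d, y div d) then \<Phi> (ketbra d (fst p) (snd p)) $$ (x mod d, y mod d) else 0)"
      using xd yd p by (auto simp: ketbra_entry)
    finally show "(case p of (i, j) \<Rightarrow> kron (ketbra d i j) (\<Phi> (ketbra d i j))) $$ (x,y)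
        = (if p = (x div d, y div d) then \<Phi> (ketbra d (fst p) (snd p)) $$ (x mod d, y mod d) else 0)"
      using p by simp
  qed
  also have "\<dots> = \<Phi> (ketbra d (x div d) (y div d)) $$ (x mod d, y mod d)"
    using xd yd by simp
  finally show ?thesis .
qed

abbreviation PM :: "bool list \<times> bool list \<Rightarrow> cmat" where
  "PM k \<equiv> pauli (fst k) (snd k)"

lemma pauli_idx_finite: "finite (pauli_idx n)"
proof -
  have "pauli_idx n = {zs. length zs = n} \<times> {xs. length xs = n}"
    by (auto simp: pauli_idx_def)
  then show ?thesis using finite_lists_length_eq[of "UNIV::bool set" n] by simp
qed

lemma PM_carrier: "k \<in> pauli_idx n \<Longrightarrow> PM k \<in> carrier_mat (qdim n) (qdim n)"
  using unitary_pauli[of "fst k" n "snd k"] by (auto simp: pauli_idx_def unitary_def)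

lemma PM_unitary: "k \<in> pauli_idx n \<Longrightarrow> unitary (PM k) (qdim n)"
  using unitary_pauli[of "fst k" n "snd k"] by (auto simp: pauli_idx_def)

lemma pc_entry:
  assumes "r < qdim n" "c < qdim n" "i < qdim n" "j < qdim n"
  shows "pauli_channel n p (ketbra (qdim n) i j) $$ (r,c)
       = (\<Sum>k\<in>pauli_idx n. complex_of_real (p k) * (PM k $$ (r,i) * cnj (PM k $$ (c,j))))"
proof -
  have "pauli_channel n p (ketbra (qdim n) i j) $$ (r,c)
      = (\<Sum>k\<in>pauli_idx n. (case k of (zs, xs) \<Rightarrow> complex_of_real (p (zs, xs)) \<cdot>\<^sub>m (pauli zs xs * ketbra (qdim n) i j * adj (pauli zs xs))) $$ (r,c))"
    using assms by (simp add: pauli_channel_def msum_def)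
  also have "\<dots> = (\<Sum>k\<in>pauli_idx n. complex_of_real (p k) * (PM k $$ (r,i) * cnj (PM k $$ (c,j))))"
  proof (intro sum.cong refl)
    fix k assume k: "k \<in> pauli_idx n"
    obtain zs xs where kk: "k = (zs, xs)" by (cases k)
    have Pc: "PM k \<in> carrier_mat (qdim n) (qdim n)" using PM_carrier[OF k] .
    have "(complex_of_real (p k) \<cdot>\<^sub>m (PM k * ketbra (qdim n) i j * adj (PM k))) $$ (r,c)
        = complex_of_real (p k) * (PM k * ketbra (qdim n) i j * adj (PM k)) $$ (r,c)"
      using Pc assms by (subst index_smult_mat) auto
    also have "\<dots> = complex_of_real (p k) * (PM k $$ (r,i) * cnj (PM k $$ (c,j)))"
      using conj_entry[OF Pc assms(3,4,1,2)] by simp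
    finally show "(case k of (zs, xs) \<Rightarrow> complex_of_real (p (zs, xs)) \<cdot>\<^sub>m (pauli zs xs * ketbra (qdim n) i j * adj (pauli zs xs))) $$ (r,c)
        = complex_of_real (p k) * (PM k $$ (r,i) * cnj (PM k $$ (c,j)))"
      using kk by simp
  qed
  finally show ?thesis .
qed

definition vk :: "nat \<Rightarrow> bool list \<times> bool list \<Rightarrow> complex vec" where
  "vk n k = vec (qdim n * qdim n) (\<lambda>x. PM k $$ (x mod qdim n, x div qdim n))"

lemma choi_pc_entry:
  assumes x: "x < qdim n * qdim n" and y: "y < qdim n * qdim n"
  shows "choi (qdim n) (pauli_channel n p) $$ (x,y)
       = (\<Sum>k\<in>pauli_idx n. complex_of_real (p k) * (vk n k $ x * cnj (vk n k $ y)))"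
proof -
  have d0: "0 < qdim n" by simp
  have xd: "x div qdim n < qdim n" "x mod qdim n < qdim n" using x d0 by (auto simp: less_mult_imp_div_less)
  have yd: "y div qdim n < qdim n" "y mod qdim n < qdim n" using y d0 by (auto simp: less_mult_imp_div_less)
  have "choi (qdim n) (pauli_channel n p) $$ (x,y)
      = pauli_channel n p (ketbra (qdim n) (x div qdim n) (y div qdim n)) $$ (x mod qdim n, y mod qdim n)"
    by (rule choi_entry[OF _ x y]) (simp add: pauli_channel_def msum_def)
  also have "\<dots> = (\<Sum>k\<in>pauli_idx n. complex_of_real (p k) * (vk n k $ x * cnj (vk n k $ y)))"
    using pc_entry[OF xd(2) yd(2) xd(1) yd(1)] x y by (simp add: vk_def)
  finally show ?thesis .
qed



definition qf :: "nat \<Rightarrow> cmat \<Rightarrow> complex vec \<Rightarrow> complex" where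
  "qf D A v = (\<Sum>i<D. cnj (v $ i) * (A *\<^sub>v v) $ i)"

lemma qf_expand:
  assumes "A \<in> carrier_mat D D" "v \<in> carrier_vec D"
  shows "qf D A v = (\<Sum>x<D. \<Sum>y<D. cnj (v$x) * A$$(x,y) * v$y)"
  unfolding qf_def
proof (intro sum.cong refl)
  fix x assume "x \<in> {..<D}"
  then show "cnj (v $ x) * (A *\<^sub>v v) $ x = (\<Sum>y<D. cnj (v$x) * A$$(x,y) * v$y)"
    using assms by (simp add: scalar_prod_def atLeast0LessThan sum_distrib_left mult_ac)
qed

lemma qf_minus:
  assumes "A \<in> carrier_mat D D" "B \<in> carrier_mat D D" "v \<in> carrier_vec D"
  shows "qf D (A - B) v = qf D A v - qf D B v"
proof -
  have "qf D (A - B) v = (\<Sum>x<D. \<Sum>y<D. cnj (v$x) * (A - B)$$(x,y) * v$y)"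
    using assms by (intro qf_expand) auto
  also have "\<dots> = (\<Sum>x<D. \<Sum>y<D. cnj (v$x) * A$$(x,y) * v$y - cnj (v$x) * B$$(x,y) * v$y)"
    using assms by (intro sum.cong refl) (auto simp: left_diff_distrib right_diff_distrib)
  also have "\<dots> = qf D A v - qf D B v"
    using assms by (simp add: qf_expand sum_subtractf)
  finally show ?thesis .
qed

lemma idx_bound: fixes i a m k :: nat shows "i < m \<Longrightarrow> a < k \<Longrightarrow> i*k + a < m*k"
proof -
  assume u: "i < m" and v: "a < k"
  have "i*k+a < i*k + k" using v by simp
  also have "\<dots> = (Suc i)*k" by simp
  also have "\<dots> \<le> m*k" using u by (intro mult_right_mono) auto
  finally show ?thesis .
qed

lemma sum_split2:
  fixes d :: nat and f :: "nat \<Rightarrow> nat \<Rightarrow> 'a::comm_monoid_add"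
  shows "(\<Sum>x<d*d. \<Sum>y<d*d. f x y) = (\<Sum>i<d. \<Sum>a<d. \<Sum>j<d. \<Sum>b<d. f (i*d+a) (j*d+b))"
  by (simp add: sum_split)

lemma qf_kron_one:
  assumes sig: "\<sigma> \<in> carrier_mat d d" and P: "unitary P d"
  shows "qf (d*d) (kron \<sigma> (1\<^sub>m d)) (vec (d*d) (\<lambda>x. P$$(x mod d, x div d))) = mtrace \<sigma>"
proof -
  define v where "v = vec (d*d) (\<lambda>x. P$$(x mod d, x div d))"
  have Pc: "P \<in> carrier_mat d d" using P by (simp add: unitary_def)
  have Po: "\<And>i j. i<d \<Longrightarrow> j<d \<Longrightarrow> (\<Sum>a<d. cnj (P$$(a,i)) * P$$(a,j)) = (if i = j then 1 else 0)"
    using P Pc unitary_iff by blast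
  have sd: "dim_row \<sigma> = d" "dim_col \<sigma> = d" using sig by auto
  have Kc: "kron \<sigma> (1\<^sub>m d) \<in> carrier_mat (d*d) (d*d)" by (rule carrier_matI) (simp_all only: dim_kron sd index_one_mat)
  have vc: "v \<in> carrier_vec (d*d)" by (simp add: v_def)
  have "qf (d*d) (kron \<sigma> (1\<^sub>m d)) v = (\<Sum>x<d*d. \<Sum>y<d*d. cnj (v$x) * kron \<sigma> (1\<^sub>m d)$$(x,y) * v$y)"
    by (rule qf_expand[OF Kc vc])
  also have "\<dots> = (\<Sum>i<d. \<Sum>a<d. \<Sum>j<d. \<Sum>b<d. cnj (v$(i*d+a)) * kron \<sigma> (1\<^sub>m d)$$(i*d+a,j*d+b) * v$(j*d+b))"
    by (rule sum_split2)
  also have "\<dots> = (\<Sum>i<d. \<Sum>a<d. \<Sum>j<d. \<Sum>b<d. if b = a then cnj (P$$(a,i)) * \<sigma>$$(i,j) * P$$(a,j) else 0)"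
  proof (intro sum.cong refl)
    fix i a j b assume "i \<in> {..<d}" "a \<in> {..<d}" "j \<in> {..<d}" "b \<in> {..<d}"
    then have h: "i < d" "a < d" "j < d" "b < d" by auto
    have b1: "i*d+a < d*d" "j*d+b < d*d" using h idx_bound by auto
    have "kron \<sigma> (1\<^sub>m d)$$(i*d+a,j*d+b) = \<sigma>$$(i,j) * (if a = b then 1 else 0)"
      using sig b1 h by (subst index_kron) (auto simp: divmod_simps)
    moreover have "v$(i*d+a) = P$$(a,i)" "v$(j*d+b) = P$$(b,j)" using b1 h by (auto simp: v_def divmod_simps)
    ultimately show "cnj (v$(i*d+a)) * kron \<sigma> (1\<^sub>m d)$$(i*d+a,j*d+b) * v$(j*d+b)
        = (if b = a then cnj (P$$(a,i)) * \<sigma>$$(i,j) * P$$(a,j) else 0)" by auto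
  qed
  also have "\<dots> = (\<Sum>i<d. \<Sum>a<d. \<Sum>j<d. cnj (P$$(a,i)) * \<sigma>$$(i,j) * P$$(a,j))"
  proof (rule sum.cong[OF refl], rule sum.cong[OF refl], rule sum.cong[OF refl])
    fix i a j assume "a \<in> {..<d}"
    then show "(\<Sum>b<d. if b = a then cnj (P$$(a,i)) * \<sigma>$$(i,j) * P$$(a,j) else 0) = cnj (P$$(a,i)) * \<sigma>$$(i,j) * P$$(a,j)"
      by (subst sum.delta) auto
  qed
  also have "\<dots> = (\<Sum>i<d. \<Sum>j<d. \<Sum>a<d. cnj (P$$(a,i)) * \<sigma>$$(i,j) * P$$(a,j))"
    by (rule sum.cong[OF refl], rule sum.swap)
  also have "\<dots> = (\<Sum>i<d. \<Sum>j<d. \<sigma>$$(i,j) * (\<Sum>a<d. cnj (P$$(a,i)) * P$$(a,j)))"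
  proof (rule sum.cong[OF refl], rule sum.cong[OF refl])
    fix i j
    have "(\<Sum>a<d. cnj (P$$(a,i)) * \<sigma>$$(i,j) * P$$(a,j)) = (\<Sum>a<d. \<sigma>$$(i,j) * (cnj (P$$(a,i)) * P$$(a,j)))"
      by (rule sum.cong[OF refl]) (simp only: mult.commute mult.left_commute)
    then show "(\<Sum>a<d. cnj (P$$(a,i)) * \<sigma>$$(i,j) * P$$(a,j)) = \<sigma>$$(i,j) * (\<Sum>a<d. cnj (P$$(a,i)) * P$$(a,j))"
      by (simp only: sum_distrib_left)
  qed
  also have "\<dots> = (\<Sum>i<d. \<Sum>j<d. if i = j then \<sigma>$$(i,j) else 0)"
  proof (rule sum.cong[OF refl], rule sum.cong[OF refl])
    fix i j assume "i \<in> {..<d}" "j \<in> {..<d}"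
    then show "\<sigma>$$(i,j) * (\<Sum>a<d. cnj (P$$(a,i)) * P$$(a,j)) = (if i = j then \<sigma>$$(i,j) else 0)"
      using Po by simp
  qed
  also have "\<dots> = (\<Sum>i<d. \<sigma>$$(i,i))"
    by (rule sum.cong[OF refl]) (subst sum.delta', auto)
  also have "\<dots> = mtrace \<sigma>" using sig by (simp add: mtrace_def)
  finally show ?thesis by (simp add: v_def)
qed

lemma dim_choi[simp]: "dim_row (choi d \<Phi>) = d * d" "dim_col (choi d \<Phi>) = d * d"
  by (simp_all add: choi_def msum_def)

lemma vk_carrier: "vk n k \<in> carrier_vec (qdim n * qdim n)" by (simp add: vk_def)

lemma pred_lin:
  assumes E: "E \<in> carrier_mat (qdim n * qdim n) (qdim n * qdim n)"
  shows "pred E (choi (qdim n) (pauli_channel n p))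
       = (\<Sum>k\<in>pauli_idx n. p k * Re (qf (qdim n * qdim n) E (vk n k)))"
proof -
  define D where "D = qdim n * qdim n"
  define C where "C = choi (qdim n) (pauli_channel n p)"
  define K where "K = pauli_idx n"
  have Cd: "dim_row C = D" "dim_col C = D" by (simp_all add: C_def D_def)
  have Ec: "E \<in> carrier_mat D D" using E by (simp add: D_def)
  have "mtrace (E * C) = (\<Sum>x<D. (E * C) $$ (x,x))" using Ec by (simp add: mtrace_def)
  also have "\<dots> = (\<Sum>x<D. \<Sum>y<D. E$$(x,y) * C$$(y,x))"
  proof (intro sum.cong refl)
    fix x assume "x \<in> {..<D}"
    then show "(E * C) $$ (x,x) = (\<Sum>y<D. E$$(x,y) * C$$(y,x))"
      using Ec Cd by (subst mult_entry) auto
  qed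
  also have "\<dots> = (\<Sum>x<D. \<Sum>y<D. \<Sum>k\<in>K. complex_of_real (p k) * (cnj (vk n k $ x) * E$$(x,y) * vk n k $ y))"
  proof (intro sum.cong refl)
    fix x y assume "x \<in> {..<D}" "y \<in> {..<D}"
    then have "C$$(y,x) = (\<Sum>k\<in>K. complex_of_real (p k) * (vk n k $ y * cnj (vk n k $ x)))"
      unfolding C_def K_def D_def by (intro choi_pc_entry) auto
    then show "E$$(x,y) * C$$(y,x) = (\<Sum>k\<in>K. complex_of_real (p k) * (cnj (vk n k $ x) * E$$(x,y) * vk n k $ y))"
      by (simp add: sum_distrib_left mult_ac)
  qed
  also have "\<dots> = (\<Sum>x<D. \<Sum>k\<in>K. \<Sum>y<D. complex_of_real (p k) * (cnj (vk n k $ x) * E$$(x,y) * vk n k $ y))"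
    by (intro sum.cong refl sum.swap)
  also have "\<dots> = (\<Sum>k\<in>K. \<Sum>x<D. \<Sum>y<D. complex_of_real (p k) * (cnj (vk n k $ x) * E$$(x,y) * vk n k $ y))"
    by (rule sum.swap)
  also have "\<dots> = (\<Sum>k\<in>K. complex_of_real (p k) * qf D E (vk n k))"
  proof (intro sum.cong refl)
    fix k assume "k \<in> K"
    have "qf D E (vk n k) = (\<Sum>x<D. \<Sum>y<D. cnj (vk n k $ x) * E$$(x,y) * vk n k $ y)"
      using Ec vk_carrier[of n k] by (intro qf_expand) (auto simp: D_def)
    then show "(\<Sum>x<D. \<Sum>y<D. complex_of_real (p k) * (cnj (vk n k $ x) * E$$(x,y) * vk n k $ y))
        = complex_of_real (p k) * qf D E (vk n k)"
      by (simp add: sum_distrib_left)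
  qed
  finally have "mtrace (E * C) = (\<Sum>k\<in>K. complex_of_real (p k) * qf D E (vk n k))" .
  then show ?thesis by (simp add: pred_def C_def K_def D_def)
qed

definition Fk :: "nat \<Rightarrow> cmat \<Rightarrow> bool list \<times> bool list \<Rightarrow> real" where
  "Fk n E k = Re (qf (qdim n * qdim n) E (vk n k))"

lemma Fk_bounds:
  assumes E: "channel_test n E" and k: "k \<in> pauli_idx n"
  shows "0 \<le> Fk n E k \<and> Fk n E k \<le> 1"
proof -
  define D where "D = qdim n * qdim n"
  have psdE: "psd D E" using E by (simp add: channel_test_def D_def)
  obtain \<sigma> where den: "density (qdim n) \<sigma>" and psdM: "psd D (kron \<sigma> (1\<^sub>m (qdim n)) - E)"
    using E by (auto simp: channel_test_def D_def)
  have Ec: "E \<in> carrier_mat D D" using psdE by (simp add: psd_def)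
  have sc: "\<sigma> \<in> carrier_mat (qdim n) (qdim n)" using den by (simp add: density_def psd_def)
  have tr: "mtrace \<sigma> = 1" using den by (simp add: density_def)
  have vc: "vk n k \<in> carrier_vec D" by (simp add: vk_carrier D_def)
  have "0 \<le> Re (qf D E (vk n k))" using psdE vc by (simp add: psd_def qf_def)
  moreover have "0 \<le> Re (qf D (kron \<sigma> (1\<^sub>m (qdim n)) - E) (vk n k))" using psdM vc by (simp add: psd_def qf_def)
  moreover have "qf D (kron \<sigma> (1\<^sub>m (qdim n)) - E) (vk n k) = qf D (kron \<sigma> (1\<^sub>m (qdim n))) (vk n k) - qf D E (vk n k)"
    using sc Ec vc by (intro qf_minus) (auto simp: D_def)
  moreover have "qf D (kron \<sigma> (1\<^sub>m (qdim n))) (vk n k) = 1"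
    using qf_kron_one[OF sc PM_unitary[OF k]] tr by (simp add: D_def vk_def)
  ultimately show ?thesis by (simp add: Fk_def D_def)
qed



lemma card_pauli_idx: "card (pauli_idx n) = 2^n * 2^n"
proof -
  have e: "pauli_idx n = {zs::bool list. set zs \<subseteq> UNIV \<and> length zs = n} \<times> {xs::bool list. set xs \<subseteq> UNIV \<and> length xs = n}"
    by (auto simp: pauli_idx_def)
  show ?thesis unfolding e card_cartesian_product
    using card_lists_length_eq[of "UNIV::bool set" n] by simp
qed

lemma ln_card_le: "ln (real (card (pauli_idx n))) \<le> 2 * real n"
proof -
  have "ln (real (card (pauli_idx n))) = ln ((2::real)^n * 2^n)" by (simp add: card_pauli_idx)
  also have "\<dots> = ln ((2::real)^n) + ln (2^n)" by (simp add: ln_mult)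
  also have "\<dots> = 2 * (real n * ln 2)" by (simp add: ln_realpow)
  also have "\<dots> \<le> 2 * (real n * 1)" using ln_2_less_1 by (intro mult_left_mono) auto
  finally show ?thesis by simp
qed

lemma pauli_idx_ne: "(replicate n False, replicate n False) \<in> pauli_idx n"
  by (simp add: pauli_idx_def)

lemma hw_prob_vec: "prob_vec n (hw (pauli_idx n) \<eta> c)"
proof -
  have ne: "pauli_idx n \<noteq> {}" using pauli_idx_ne[of n] by blast
  show ?thesis unfolding prob_vec_def using hw_nonneg hw_sum[OF pauli_idx_finite ne] by auto
qed

lemma olo_bound:
  fixes K :: "'k set" and f :: "nat \<Rightarrow> 'k \<Rightarrow> real" and s :: "nat \<Rightarrow> real" and q :: "'k \<Rightarrow> real"
  assumes K: "finite K" "K \<noteq> {}" and eta: "\<eta> > 0" and L: "L > 0"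
    and f: "\<And>t k. t < T \<Longrightarrow> k \<in> K \<Longrightarrow> 0 \<le> f t k \<and> f t k \<le> 1"
    and s: "\<And>t. t < T \<Longrightarrow> \<bar>s t\<bar> \<le> L"
    and q: "\<And>k. k \<in> K \<Longrightarrow> 0 \<le> q k" "(\<Sum>k\<in>K. q k) = 1"
  shows "(\<Sum>t<T. s t * ((\<Sum>k\<in>K. hw K \<eta> (\<lambda>k. \<Sum>u<t. (1 + s u * f u k / L) / 2) k * f t k) - (\<Sum>k\<in>K. q k * f t k)))
         \<le> 2 * L * (ln (real (card K)) / \<eta> + \<eta> * T)"
proof -
  define l where "l t k = (1 + s t * f t k / L) / 2" for t k
  define P where "P t = hw K \<eta> (\<lambda>k. \<Sum>u<t. l u k)" for t
  define B where "B = ln (real (card K)) / \<eta> + \<eta> * T"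
  have lb: "0 \<le> l t k \<and> l t k \<le> 1" if "t < T" "k \<in> K" for t k
  proof -
    have "\<bar>s t\<bar> * f t k \<le> L * 1"
      using s[OF that(1)] f[OF that] L by (intro mult_mono) auto
    then have "\<bar>s t * f t k\<bar> \<le> L * 1"
      using f[OF that] by (simp add: abs_mult)
    then have "\<bar>s t * f t k / L\<bar> \<le> 1" using L by (simp add: divide_le_eq)
    then have z: "s t * f t k / L \<le> 1 \<and> - (s t * f t k / L) \<le> 1" by (simp only: abs_le_iff)
    have z1: "s t * f t k / L \<le> 1" and z2: "- (s t * f t k / L) \<le> 1" using z by auto
    have key: "\<And>z::real. z \<le> 1 \<Longrightarrow> -z \<le> 1 \<Longrightarrow> 0 \<le> (1+z)/2 \<and> (1+z)/2 \<le> 1" by auto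
    show ?thesis unfolding l_def by (rule key[OF z1 z2])
  qed
  have Psum: "(\<Sum>k\<in>K. P t k) = 1" for t unfolding P_def by (rule hw_sum[OF K])
  define G where "G k0 = (\<Sum>t<T. s t * ((\<Sum>k\<in>K. P t k * f t k) - f t k0))" for k0
  have G: "G k0 \<le> 2 * L * B" if k0: "k0 \<in> K" for k0
  proof -
    have H: "(\<Sum>t<T. \<Sum>k\<in>K. P t k * l t k) - (\<Sum>t<T. l t k0) \<le> B"
      unfolding P_def B_def by (rule hedge[OF K(1) k0 eta lb])
    have e1: "(\<Sum>k\<in>K. P t k * l t k) = 1/2 + s t / (2 * L) * (\<Sum>k\<in>K. P t k * f t k)" for t
    proof -
      have "(\<Sum>k\<in>K. P t k * l t k) = (\<Sum>k\<in>K. P t k * (1/2) + (s t / (2 * L)) * (P t k * f t k))"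
        unfolding l_def by (intro sum.cong refl) (simp add: field_simps)
      also have "\<dots> = (\<Sum>k\<in>K. P t k) * (1/2) + (s t / (2 * L)) * (\<Sum>k\<in>K. P t k * f t k)"
        by (simp add: sum.distrib sum_distrib_left sum_distrib_right)
      finally show ?thesis using Psum[of t] by simp
    qed
    have e2: "l t k0 = 1/2 + s t / (2 * L) * f t k0" for t unfolding l_def by (simp add: field_simps)
    have "(\<Sum>t<T. \<Sum>k\<in>K. P t k * l t k) - (\<Sum>t<T. l t k0) = (\<Sum>t<T. (\<Sum>k\<in>K. P t k * l t k) - l t k0)"
      by (simp add: sum_subtractf)
    also have "\<dots> = (\<Sum>t<T. (1 / (2 * L)) * (s t * ((\<Sum>k\<in>K. P t k * f t k) - f t k0)))"
      using L by (intro sum.cong refl) (simp add: e1 e2 field_simps)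
    also have "\<dots> = (1 / (2 * L)) * G k0" by (simp add: G_def sum_distrib_left)
    finally have "(1 / (2 * L)) * G k0 \<le> B" using H by simp
    then show ?thesis using L by (simp add: field_simps)
  qed
  have "(\<Sum>t<T. s t * ((\<Sum>k\<in>K. P t k * f t k) - (\<Sum>k\<in>K. q k * f t k)))
      = (\<Sum>t<T. \<Sum>k0\<in>K. q k0 * (s t * ((\<Sum>k\<in>K. P t k * f t k) - f t k0)))"
  proof (rule sum.cong[OF refl])
    fix t
    define A where "A = (\<Sum>k\<in>K. P t k * f t k)"
    have "(\<Sum>k0\<in>K. q k0 * (s t * (A - f t k0))) = (\<Sum>k0\<in>K. q k0 * (s t * A) - s t * (q k0 * f t k0))"
      by (intro sum.cong refl) (simp add: algebra_simps)
    also have "\<dots> = (\<Sum>k0\<in>K. q k0) * (s t * A) - s t * (\<Sum>k0\<in>K. q k0 * f t k0)"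
      by (simp add: sum_subtractf sum_distrib_left sum_distrib_right)
    finally have "(\<Sum>k0\<in>K. q k0 * (s t * ((\<Sum>k\<in>K. P t k * f t k) - f t k0)))
        = (\<Sum>k0\<in>K. q k0) * (s t * (\<Sum>k\<in>K. P t k * f t k)) - s t * (\<Sum>k0\<in>K. q k0 * f t k0)"
      unfolding A_def .
    then show "s t * ((\<Sum>k\<in>K. P t k * f t k) - (\<Sum>k\<in>K. q k * f t k))
        = (\<Sum>k0\<in>K. q k0 * (s t * ((\<Sum>k\<in>K. P t k * f t k) - f t k0)))"
      using q(2) by (simp add: algebra_simps)
  qed
  also have "\<dots> = (\<Sum>k0\<in>K. q k0 * G k0)"
    unfolding G_def by (subst sum.swap) (simp add: sum_distrib_left)
  also have "\<dots> \<le> (\<Sum>k0\<in>K. q k0 * (2 * L * B))"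
    using G q(1) by (intro sum_mono mult_left_mono) auto
  also have "\<dots> = 2 * L * B" using q(2) by (simp add: sum_distrib_right[symmetric])
  finally show ?thesis by (simp add: P_def l_def B_def)
qed

lemma conv_01:
  assumes "finite K" "\<And>k. k \<in> K \<Longrightarrow> 0 \<le> w k" "(\<Sum>k\<in>K. w k) = 1"
    and "\<And>k. k \<in> K \<Longrightarrow> 0 \<le> g k \<and> g k \<le> (1::real)"
  shows "0 \<le> (\<Sum>k\<in>K. w k * g k) \<and> (\<Sum>k\<in>K. w k * g k) \<le> 1"
proof
  show "0 \<le> (\<Sum>k\<in>K. w k * g k)" using assms by (intro sum_nonneg) auto
  have "(\<Sum>k\<in>K. w k * g k) \<le> (\<Sum>k\<in>K. w k * 1)" using assms by (intro sum_mono mult_left_mono) auto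
  then show "(\<Sum>k\<in>K. w k * g k) \<le> 1" using assms(3) by simp
qed

lemma sqrt_arith:
  assumes n: "0 < n" and T: "0 < T"
  shows "(n::real) / sqrt (n / T) = sqrt (n * T)" "sqrt (n / T) * T = sqrt (n * T)"
proof -
  have sn: "sqrt n * sqrt n = n" using n by simp
  have sT: "sqrt T * sqrt T = T" using T by simp
  have p1: "sqrt n > 0" "sqrt T > 0" using n T by auto
  show "n / sqrt (n / T) = sqrt (n * T)"
    unfolding real_sqrt_divide real_sqrt_mult using p1
    by (subst (1) sn[symmetric]) (simp add: field_simps)
  show "sqrt (n / T) * T = sqrt (n * T)"
    unfolding real_sqrt_divide real_sqrt_mult using p1
    by (subst (3) sT[symmetric]) (simp add: field_simps)
qed

lemma main_lemma:
  fixes n :: nat and lf :: "real \<Rightarrow> real" and L :: real and T :: nat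
  assumes cvx: "convex_on {-1..1} lf"
    and lip: "\<forall>x\<in>{-1..1}. \<forall>y\<in>{-1..1}. \<bar>lf x - lf y\<bar> \<le> L * \<bar>x - y\<bar>"
  shows "\<exists>strat :: (cmat \<times> real) list \<Rightarrow> cmat.
         (\<forall>h. strat h \<in> PAULI' n) \<and>
         (\<forall>(E::nat \<Rightarrow> cmat) (b::nat \<Rightarrow> real).
            (\<forall>t<T. channel_test n (E t) \<and> 0 \<le> b t \<and> b t \<le> 1) \<longrightarrow>
            (\<forall>p. prob_vec n p \<longrightarrow>
               (\<Sum>t<T. lf (pred (E t) (strat (map (\<lambda>s. (E s, b s)) [0..<t])) - b t))
             - (\<Sum>t<T. lf (pred (E t) (choi (qdim n) (pauli_channel n p)) - b t))
             \<le> 6 * L * sqrt (real n * real T)))"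
proof -
  have L0: "0 \<le> L" using lip[rule_format, of 1 "-1"] by auto
  define sg where "sg x = (SOME s. \<bar>s\<bar> \<le> L \<and> (\<forall>y\<in>{-1..1}. lf x + s * (y - x) \<le> lf y))" for x
  have sgp: "\<bar>sg x\<bar> \<le> L \<and> (\<forall>y\<in>{-1..1}. lf x + sg x * (y - x) \<le> lf y)" if "x \<in> {-1..1}" for x
    unfolding sg_def by (rule someI_ex) (rule subgrad[OF cvx lip that])
  define K where "K = pauli_idx n"
  have Kfin: "finite K" by (simp add: K_def pauli_idx_finite)
  have Kne: "K \<noteq> {}" using pauli_idx_ne[of n] by (auto simp: K_def)
  define \<eta> where "\<eta> = (if 0 < n \<and> 0 < T then sqrt (real n / real T) else 1)"
  define step where "step = (\<lambda>(c :: bool list \<times> bool list \<Rightarrow> real) (Eb :: cmat \<times> real).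
      (\<lambda>k. c k + (1 + sg ((\<Sum>j\<in>K. hw K \<eta> c j * Fk n (fst Eb) j) - snd Eb) * Fk n (fst Eb) k / L) / 2))"
  define cum where "cum h = foldl step (\<lambda>k. 0) h" for h
  define strat where "strat h = choi (qdim n) (pauli_channel n (hw K \<eta> (cum h)))" for h
  show ?thesis
  proof (intro exI[of _ strat] conjI allI impI)
    fix h show "strat h \<in> PAULI' n" unfolding strat_def PAULI'_def K_def using hw_prob_vec by blast
  next
    fix E :: "nat \<Rightarrow> cmat" and b :: "nat \<Rightarrow> real" and p
    assume valid: "\<forall>t<T. channel_test n (E t) \<and> 0 \<le> b t \<and> b t \<le> 1" and pv: "prob_vec n p"
    define hist where "hist t = map (\<lambda>s. (E s, b s)) [0..<t]" for t
    define f where "f t k = Fk n (E t) k" for t k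
    define c where "c t = cum (hist t)" for t
    define P where "P t = hw K \<eta> (c t)" for t
    define x where "x t = (\<Sum>k\<in>K. P t k * f t k) - b t" for t
    define y where "y t = (\<Sum>k\<in>K. p k * f t k) - b t" for t
    define l where "l t k = (1 + sg (x t) * f t k / L) / 2" for t k
    have cS: "c (Suc t) = (\<lambda>k. c t k + l t k)" for t
    proof -
      have "hist (Suc t) = hist t @ [(E t, b t)]" by (simp add: hist_def)
      then have "c (Suc t) = step (c t) (E t, b t)" by (simp add: c_def cum_def)
      then show ?thesis by (simp add: step_def l_def x_def P_def f_def)
    qed
    have cE: "c t = (\<lambda>k. \<Sum>u<t. l u k)" for t
    proof (induction t)
      case 0 then show ?case by (simp add: c_def cum_def hist_def)
    next
      case (Suc t) then show ?case by (simp add: cS)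
    qed
    have Pe: "P t = hw K \<eta> (\<lambda>k. \<Sum>u<t. (1 + sg (x u) * f u k / L) / 2)" for t
      unfolding P_def cE l_def ..
    have fb: "0 \<le> f t k \<and> f t k \<le> 1" if "t < T" "k \<in> K" for t k
      using Fk_bounds[of n "E t" k] valid that by (simp add: f_def K_def)
    have Ecar: "E t \<in> carrier_mat (qdim n * qdim n) (qdim n * qdim n)" if "t < T" for t
      using valid that by (simp add: channel_test_def psd_def)
    have Pnn: "0 \<le> P t k" for t k unfolding P_def by (rule hw_nonneg)
    have Psum: "(\<Sum>k\<in>K. P t k) = 1" for t unfolding P_def by (rule hw_sum[OF Kfin Kne])
    have pnn: "0 \<le> p k" if "k \<in> K" for k using pv that by (simp add: prob_vec_def K_def)
    have psum: "(\<Sum>k\<in>K. p k) = 1" using pv by (simp add: prob_vec_def K_def)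
    have pred1: "pred (E t) (strat (hist t)) = (\<Sum>k\<in>K. P t k * f t k)" if "t < T" for t
      unfolding strat_def using pred_lin[OF Ecar[OF that]]
      by (simp add: K_def P_def c_def f_def Fk_def)
    have pred2: "pred (E t) (choi (qdim n) (pauli_channel n p)) = (\<Sum>k\<in>K. p k * f t k)" if "t < T" for t
      using pred_lin[OF Ecar[OF that]] by (simp add: K_def f_def Fk_def)
    have xr: "x t \<in> {-1..1}" if "t < T" for t
      using conv_01[OF Kfin, of "P t" "f t"] Pnn Psum fb[OF that] valid that unfolding x_def by auto
    have yr: "y t \<in> {-1..1}" if "t < T" for t
      using conv_01[OF Kfin, of p "f t"] pnn psum fb[OF that] valid that unfolding y_def by auto
    have trm: "lf (x t) - lf (y t) \<le> sg (x t) * ((\<Sum>k\<in>K. P t k * f t k) - (\<Sum>k\<in>K. p k * f t k))"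
      if "t < T" for t
    proof -
      have "lf (x t) + sg (x t) * (y t - x t) \<le> lf (y t)" using sgp[OF xr[OF that]] yr[OF that] by blast
      moreover have "y t - x t = (\<Sum>k\<in>K. p k * f t k) - (\<Sum>k\<in>K. P t k * f t k)" by (simp add: x_def y_def)
      ultimately show ?thesis by (simp add: algebra_simps)
    qed
    define R where "R = (\<Sum>t<T. sg (x t) * ((\<Sum>k\<in>K. P t k * f t k) - (\<Sum>k\<in>K. p k * f t k)))"
    have "(\<Sum>t<T. lf (pred (E t) (strat (map (\<lambda>s. (E s, b s)) [0..<t])) - b t))
             - (\<Sum>t<T. lf (pred (E t) (choi (qdim n) (pauli_channel n p)) - b t))
          = (\<Sum>t<T. lf (x t) - lf (y t))"
      unfolding sum_subtractf[symmetric]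
      by (intro sum.cong refl) (simp add: hist_def[symmetric] pred1 pred2 x_def y_def)
    also have "\<dots> \<le> R" unfolding R_def by (intro sum_mono trm) simp
    also have "R \<le> 6 * L * sqrt (real n * real T)"
    proof (cases "0 < n \<and> 0 < T \<and> 0 < L")
      case True
      then have eta: "\<eta> = sqrt (real n / real T)" and etap: "\<eta> > 0" by (auto simp: \<eta>_def)
      have "R \<le> 2 * L * (ln (real (card K)) / \<eta> + \<eta> * T)"
        unfolding R_def Pe
        by (rule olo_bound[OF Kfin Kne etap, where L=L and s="\<lambda>t. sg (x t)" and q=p and f=f and T=T])
           (use True sgp xr pnn psum fb in auto)
      also have "\<dots> \<le> 2 * L * (2 * real n / \<eta> + \<eta> * T)"
        using ln_card_le[of n] etap L0 unfolding K_def
        by (intro mult_left_mono add_right_mono divide_right_mono) auto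
      also have "\<dots> = 2 * L * (3 * sqrt (real n * real T))"
        using sqrt_arith[of "real n" "real T"] True unfolding eta by simp
      finally show ?thesis by simp
    next
      case False
      have R0: "R = 0"
      proof -
        consider "T = 0" | "n = 0" | "L = 0" using False L0 by linarith
        then show ?thesis
        proof cases
          case 1 then show ?thesis by (simp add: R_def)
        next
          case 2
          then have K1: "K = {([], [])}" by (auto simp: K_def pauli_idx_def)
          have "(\<Sum>k\<in>K. P t k * f t k) = (\<Sum>k\<in>K. p k * f t k)" for t
            using Psum[of t] psum unfolding K1 by simp
          then show ?thesis by (simp add: R_def)
        next
          case 3
          have "sg (x t) = 0" if "t < T" for t using sgp[OF xr[OF that]] 3 by simp
          then show ?thesis unfolding R_def by (intro sum.neutral) simp
        qed
      qed
      show ?thesis using R0 L0 by simp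
    qed
    finally show "(\<Sum>t<T. lf (pred (E t) (strat (map (\<lambda>s. (E s, b s)) [0..<t])) - b t))
             - (\<Sum>t<T. lf (pred (E t) (choi (qdim n) (pauli_channel n p)) - b t))
          \<le> 6 * L * sqrt (real n * real T)" .
  qed
qed

theorem theorem3p5:
  shows "\<exists>C::real. C > 0 \<and>
    (\<forall>(n::nat) (lf::real \<Rightarrow> real) (L::real).
      convex_on {-1..1} lf \<and>
      (\<forall>x\<in>{-1..1}. \<forall>y\<in>{-1..1}. \<bar>lf x - lf y\<bar> \<le> L * \<bar>x - y\<bar>) \<longrightarrow>
      (\<forall>T::nat. \<exists>strat :: (cmat \<times> real) list \<Rightarrow> cmat.
         (\<forall>h. strat h \<in> PAULI' n) \<and>
         (\<forall>(E::nat \<Rightarrow> cmat) (b::nat \<Rightarrow> real).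
            (\<forall>t<T. channel_test n (E t) \<and> 0 \<le> b t \<and> b t \<le> 1) \<longrightarrow>
            (\<forall>p. prob_vec n p \<longrightarrow>
               (\<Sum>t<T. lf (pred (E t) (strat (map (\<lambda>s. (E s, b s)) [0..<t])) - b t))
             - (\<Sum>t<T. lf (pred (E t) (choi (qdim n) (pauli_channel n p)) - b t))
             \<le> C * L * sqrt (real n * real T)))))"
proof (rule exI[of _ "6::real"], intro conjI allI impI)
  show "(6::real) > 0" by simp
next
  fix n :: nat and lf :: "real \<Rightarrow> real" and L :: real and T :: nat
  assume h: "convex_on {-1..1} lf \<and> (\<forall>x\<in>{-1..1}. \<forall>y\<in>{-1..1}. \<bar>lf x - lf y\<bar> \<le> L * \<bar>x - y\<bar>)"
  then show "\<exists>strat :: (cmat \<times> real) list \<Rightarrow> cmat.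
         (\<forall>h. strat h \<in> PAULI' n) \<and>
         (\<forall>(E::nat \<Rightarrow> cmat) (b::nat \<Rightarrow> real).
            (\<forall>t<T. channel_test n (E t) \<and> 0 \<le> b t \<and> b t \<le> 1) \<longrightarrow>
            (\<forall>p. prob_vec n p \<longrightarrow>
               (\<Sum>t<T. lf (pred (E t) (strat (map (\<lambda>s. (E s, b s)) [0..<t])) - b t))
             - (\<Sum>t<T. lf (pred (E t) (choi (qdim n) (pauli_channel n p)) - b t))
             \<le> 6 * L * sqrt (real n * real T)))"
    using main_lemma by blast
qed

end
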